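(* The cut rule — from $\Delta' \vdash A$ and $\Delta(A) \vdash B$ infer $\Delta(\Delta') \vdash B$, for an arbitrary bunched context $\Delta(-)$ — is admissible in the cut-free fragment $\vdash_{\mathsf{cf}}$ of BI+$L$. That is, if $\Delta' \vdash_{\mathsf{cf}} A$ and $\Delta(A) \vdash_{\mathsf{cf}} B$ are derivable in BI+$L$ without cut, then $\Delta(\Delta') \vdash_{\mathsf{cf}} B$ is derivable in BI+$L$ without cut.
   Context: BI is the logic of bunched implications, with formulas built from atoms, $\top,\bot,\wedge,\vee,\to$ and the multiplicatives $\mathsf{emp}$, $\ast$ (separating conjunction), $-\!\ast$ (magic wand). Its sequent calculus operates on sequents $\Delta \vdash \varphi$ where $\Delta$ is a bunch: a tree whose binary nodes are labelled with "$,$" (multiplicative, corresponding to $\ast$) or "$;$" (additive, corresponding to $\wedge$) and whose leaves are formulas or the empty bunches $\varnothing_m$, $\varnothing_a$, taken modulo commutative monoid laws for $(",",\varnothing_m)$ and $(";",\varnothing_a)$. A bunched context $\Delta(-)$ is a bunch with a hole. The calculus has the axiom $a \vdash a$ for atoms, weakening and contraction for "$;$" inside arbitrary bunched contexts, the usual left/right rules for all connectives (left rules applying deep inside bunched contexts), and the cut rule. A bunched term is a bunch built from "$,$", "$;$" and variables $x_1,\dots,x_n$; it is linear if each variable occurs at most once; $T[\Delta_1,\dots,\Delta_n]$ denotes substitution of $\Delta_j$ for $x_j$. A simple structural rule is a tuple $(\{T_1,\dots,T_m\},T)$ with $T$ linear, representing the rule: from $\Pi(T_i[\vec\Delta]) \vdash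 \varphi$ for all $1\le i\le m$, infer $\Pi(T[\vec\Delta]) \vdash \varphi$, for any bunched context $\Pi$ and bunches $\vec\Delta$ (e.g. weakening for "$,$" is $(\{x_1\}, x_1 , x_2)$). Fix a finite collection $L$ of simple structural rules; BI+$L$ is the BI sequent calculus extended with the rules in $L$, and $\vdash_{\mathsf{cf}}$ denotes provability in BI+$L$ without the cut rule. *)

theory Defs
  imports Main
begin

datatype 'a fm =
    Atom 'a
  | Top
  | Bot
  | Conj "'a fm" "'a fm"
  | Disj "'a fm" "'a fm"
  | Imp "'a fm" "'a fm"
  | Emp
  | Star "'a fm" "'a fm"
  | Wand "'a fm" "'a fm"

datatype 'a bunch =
    Leaf "'a fm"
  | EmpM
  | EmpA
  | Comma "'a bunch" "'a bunch"
  | Semi "'a bunch" "'a bunch"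

inductive bequiv :: "'a bunch \<Rightarrow> 'a bunch \<Rightarrow> bool" where
  brefl: "bequiv G G"
| bsym: "bequiv G H \<Longrightarrow> bequiv H G"
| btrans: "bequiv G H \<Longrightarrow> bequiv H K \<Longrightarrow> bequiv G K"
| bcong_comma: "bequiv G G' \<Longrightarrow> bequiv H H' \<Longrightarrow> bequiv (Comma G H) (Comma G' H')"
| bcong_semi: "bequiv G G' \<Longrightarrow> bequiv H H' \<Longrightarrow> bequiv (Semi G H) (Semi G' H')"
| comma_comm: "bequiv (Comma G H) (Comma H G)"
| comma_assoc: "bequiv (Comma (Comma G H) K) (Comma G (Comma H K))"
| comma_unit: "bequiv (Comma G EmpM) G"
| semi_comm: "bequiv (Semi G H) (Semi H G)"
| semi_assoc: "bequiv (Semi (Semi G H) K) (Semi G (Semi H K))"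
| semi_unit: "bequiv (Semi G EmpA) G"

datatype 'a ctx =
    Hole
  | CommaL "'a ctx" "'a bunch"
  | CommaR "'a bunch" "'a ctx"
  | SemiL "'a ctx" "'a bunch"
  | SemiR "'a bunch" "'a ctx"

fun fill :: "'a ctx \<Rightarrow> 'a bunch \<Rightarrow> 'a bunch" where
  "fill Hole D = D"
| "fill (CommaL C G) D = Comma (fill C D) G"
| "fill (CommaR G C) D = Comma G (fill C D)"
| "fill (SemiL C G) D = Semi (fill C D) G"
| "fill (SemiR G C) D = Semi G (fill C D)"

datatype bterm =
    Var nat
  | TComma bterm bterm
  | TSemi bterm bterm

fun tvars :: "bterm \<Rightarrow> nat list" where
  "tvars (Var n) = [n]"
| "tvars (TComma s t) = tvars s @ tvars t"
| "tvars (TSemi s t) = tvars s @ tvars t"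

definition linear :: "bterm \<Rightarrow> bool" where
  "linear T \<longleftrightarrow> distinct (tvars T)"

fun tsubst :: "bterm \<Rightarrow> (nat \<Rightarrow> 'a bunch) \<Rightarrow> 'a bunch" where
  "tsubst (Var n) ds = ds n"
| "tsubst (TComma s t) ds = Comma (tsubst s ds) (tsubst t ds)"
| "tsubst (TSemi s t) ds = Semi (tsubst s ds) (tsubst t ds)"

type_synonym srule = "bterm set \<times> bterm"

definition simple_rule :: "srule \<Rightarrow> bool" where
  "simple_rule r \<longleftrightarrow> finite (fst r) \<and> linear (snd r)"

inductive cf :: "srule set \<Rightarrow> 'a bunch \<Rightarrow> 'a fm \<Rightarrow> bool" for L :: "srule set" where
  ax: "cf L (Leaf (Atom a)) (Atom a)"
| equiv: "bequiv G G' \<Longrightarrow> cf L G A \<Longrightarrow> cf L G' A"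
| weak: "cf L (fill D G) A \<Longrightarrow> cf L (fill D (Semi G G')) A"
| contr: "cf L (fill D (Semi G G)) A \<Longrightarrow> cf L (fill D G) A"
| topR: "cf L EmpA Top"
| topL: "cf L (fill D EmpA) A \<Longrightarrow> cf L (fill D (Leaf Top)) A"
| empR: "cf L EmpM Emp"
| empL: "cf L (fill D EmpM) A \<Longrightarrow> cf L (fill D (Leaf Emp)) A"
| botL: "cf L (fill D (Leaf Bot)) A"
| conjL: "cf L (fill D (Semi (Leaf A) (Leaf B))) C \<Longrightarrow> cf L (fill D (Leaf (Conj A B))) C"
| conjR: "cf L G A \<Longrightarrow> cf L G' B \<Longrightarrow> cf L (Semi G G') (Conj A B)"
| disjL: "cf L (fill D (Leaf A)) C \<Longrightarrow> cf L (fill D (Leaf B)) C \<Longrightarrow> cf L (fill D (Leaf (Disj A B))) C"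
| disjR1: "cf L G A \<Longrightarrow> cf L G (Disj A B)"
| disjR2: "cf L G B \<Longrightarrow> cf L G (Disj A B)"
| impL: "cf L G A \<Longrightarrow> cf L (fill D (Leaf B)) C \<Longrightarrow> cf L (fill D (Semi G (Leaf (Imp A B)))) C"
| impR: "cf L (Semi G (Leaf A)) B \<Longrightarrow> cf L G (Imp A B)"
| starL: "cf L (fill D (Comma (Leaf A) (Leaf B))) C \<Longrightarrow> cf L (fill D (Leaf (Star A B))) C"
| starR: "cf L G A \<Longrightarrow> cf L G' B \<Longrightarrow> cf L (Comma G G') (Star A B)"
| wandL: "cf L G A \<Longrightarrow> cf L (fill D (Leaf B)) C \<Longrightarrow> cf L (fill D (Comma G (Leaf (Wand A B)))) C"
| wandR: "cf L (Comma G (Leaf A)) B \<Longrightarrow> cf L G (Wand A B)"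
| struct: "(Ts, T) \<in> L \<Longrightarrow> (\<forall>T'\<in>Ts. cf L (fill P (tsubst T' ds)) C) \<Longrightarrow>
           cf L (fill P (tsubst T ds)) C"

end

theory Submission
  imports Defs
begin

inductive msub :: "'a fm \<Rightarrow> 'a bunch \<Rightarrow> 'a bunch \<Rightarrow> 'a bunch \<Rightarrow> bool" for A G where
  mleaf: "msub A G (Leaf A) G"
| mrefl: "msub A G X X"
| mcomma: "msub A G X1 Y1 \<Longrightarrow> msub A G X2 Y2 \<Longrightarrow> msub A G (Comma X1 X2) (Comma Y1 Y2)"
| msemi: "msub A G X1 Y1 \<Longrightarrow> msub A G X2 Y2 \<Longrightarrow> msub A G (Semi X1 X2) (Semi Y1 Y2)"

lemma msub_Leaf: "msub A G (Leaf F) Y \<Longrightarrow> Y = Leaf F \<or> (F = A \<and> Y = G)"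
  by (cases rule: msub.cases) auto

lemma msub_EmpM: "msub A G EmpM Y \<Longrightarrow> Y = EmpM"
  by (cases rule: msub.cases) auto

lemma msub_EmpA: "msub A G EmpA Y \<Longrightarrow> Y = EmpA"
  by (cases rule: msub.cases) auto

lemma msub_Comma: "msub A G (Comma X1 X2) Y \<Longrightarrow> \<exists>Y1 Y2. Y = Comma Y1 Y2 \<and> msub A G X1 Y1 \<and> msub A G X2 Y2"
  by (cases rule: msub.cases) (auto intro: mrefl)

lemma msub_Semi: "msub A G (Semi X1 X2) Y \<Longrightarrow> \<exists>Y1 Y2. Y = Semi Y1 Y2 \<and> msub A G X1 Y1 \<and> msub A G X2 Y2"
  by (cases rule: msub.cases) (auto intro: mrefl)

lemma msub_fill: "msub A G U U' \<Longrightarrow> msub A G (fill D U) (fill D U')"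
  by (induction D) (auto intro: msub.intros)

lemma msub_fill_decomp:
  "msub A G (fill D Z) Y \<Longrightarrow> \<exists>D' Z'. Y = fill D' Z' \<and> msub A G Z Z' \<and>
     (\<forall>U U'. msub A G U U' \<longrightarrow> msub A G (fill D U) (fill D' U'))"
proof (induction D arbitrary: Y)
  case Hole
  then show ?case by (metis fill.simps(1))
next
  case (CommaL C b)
  from msub_Comma[OF CommaL.prems[simplified]] obtain Y1 Y2 where
    y: "Y = Comma Y1 Y2" "msub A G (fill C Z) Y1" "msub A G b Y2" by blast
  from CommaL.IH[OF y(2)] obtain D' Z' where "Y1 = fill D' Z'" "msub A G Z Z'"
    "\<forall>U U'. msub A G U U' \<longrightarrow> msub A G (fill C U) (fill D' U')" by blast
  then show ?case using y by (intro exI[of _ "CommaL D' Y2"] exI[of _ Z']) (auto intro: msub.intros)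
next
  case (CommaR b C)
  from msub_Comma[OF CommaR.prems[simplified]] obtain Y1 Y2 where
    y: "Y = Comma Y1 Y2" "msub A G b Y1" "msub A G (fill C Z) Y2" by blast
  from CommaR.IH[OF y(3)] obtain D' Z' where "Y2 = fill D' Z'" "msub A G Z Z'"
    "\<forall>U U'. msub A G U U' \<longrightarrow> msub A G (fill C U) (fill D' U')" by blast
  then show ?case using y by (intro exI[of _ "CommaR Y1 D'"] exI[of _ Z']) (auto intro: msub.intros)
next
  case (SemiL C b)
  from msub_Semi[OF SemiL.prems[simplified]] obtain Y1 Y2 where
    y: "Y = Semi Y1 Y2" "msub A G (fill C Z) Y1" "msub A G b Y2" by blast
  from SemiL.IH[OF y(2)] obtain D' Z' where "Y1 = fill D' Z'" "msub A G Z Z'"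
    "\<forall>U U'. msub A G U U' \<longrightarrow> msub A G (fill C U) (fill D' U')" by blast
  then show ?case using y by (intro exI[of _ "SemiL D' Y2"] exI[of _ Z']) (auto intro: msub.intros)
next
  case (SemiR b C)
  from msub_Semi[OF SemiR.prems[simplified]] obtain Y1 Y2 where
    y: "Y = Semi Y1 Y2" "msub A G b Y1" "msub A G (fill C Z) Y2" by blast
  from SemiR.IH[OF y(3)] obtain D' Z' where "Y2 = fill D' Z'" "msub A G Z Z'"
    "\<forall>U U'. msub A G U U' \<longrightarrow> msub A G (fill C U) (fill D' U')" by blast
  then show ?case using y by (intro exI[of _ "SemiR Y1 D'"] exI[of _ Z']) (auto intro: msub.intros)
qed

lemma bequiv_fill: "bequiv U U' \<Longrightarrow> bequiv (fill D U) (fill D U')"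
  by (induction D) (auto intro: bequiv.intros)


lemma bsym': "bequiv G H \<Longrightarrow> bequiv H G" by (rule bsym)

lemma msub_bequiv:
  "bequiv X X' \<Longrightarrow> (\<forall>Y. msub A G X Y \<longrightarrow> (\<exists>Y'. msub A G X' Y' \<and> bequiv Y Y')) \<and>
                    (\<forall>Y'. msub A G X' Y' \<longrightarrow> (\<exists>Y. msub A G X Y \<and> bequiv Y Y'))"
proof (induction rule: bequiv.induct)
  case (brefl Z)
  then show ?case by (meson bequiv.brefl)
next
  case (bsym Z H)
  then show ?case by (meson bequiv.bsym)
next
  case (btrans Z H K)
  then show ?case by (meson bequiv.btrans)
next
  case (bcong_comma X1 X1' X2 X2')
  show ?case
  proof (intro conjI allI impI)
    fix Y assume "msub A G (Comma X1 X2) Y"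
    then obtain Y1 Y2 where "Y = Comma Y1 Y2" "msub A G X1 Y1" "msub A G X2 Y2" by (blast dest: msub_Comma)
    then show "\<exists>Y'. msub A G (Comma X1' X2') Y' \<and> bequiv Y Y'"
      using bcong_comma.IH by (meson bequiv.bcong_comma mcomma)
  next
    fix Y assume "msub A G (Comma X1' X2') Y"
    then obtain Y1 Y2 where "Y = Comma Y1 Y2" "msub A G X1' Y1" "msub A G X2' Y2" by (blast dest: msub_Comma)
    then show "\<exists>Y'. msub A G (Comma X1 X2) Y' \<and> bequiv Y' Y"
      using bcong_comma.IH by (meson bequiv.bcong_comma mcomma)
  qed
next
  case (bcong_semi X1 X1' X2 X2')
  show ?case
  proof (intro conjI allI impI)
    fix Y assume "msub A G (Semi X1 X2) Y"
    then obtain Y1 Y2 where "Y = Semi Y1 Y2" "msub A G X1 Y1" "msub A G X2 Y2" by (blast dest: msub_Semi)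
    then show "\<exists>Y'. msub A G (Semi X1' X2') Y' \<and> bequiv Y Y'"
      using bcong_semi.IH by (meson bequiv.bcong_semi msemi)
  next
    fix Y assume "msub A G (Semi X1' X2') Y"
    then obtain Y1 Y2 where "Y = Semi Y1 Y2" "msub A G X1' Y1" "msub A G X2' Y2" by (blast dest: msub_Semi)
    then show "\<exists>Y'. msub A G (Semi X1 X2) Y' \<and> bequiv Y' Y"
      using bcong_semi.IH by (meson bequiv.bcong_semi msemi)
  qed
next
  case (comma_comm X1 X2)
  show ?case
  proof (intro conjI allI impI)
    fix Y assume "msub A G (Comma X1 X2) Y"
    then obtain Y1 Y2 where "Y = Comma Y1 Y2" "msub A G X1 Y1" "msub A G X2 Y2" by (blast dest: msub_Comma)
    then show "\<exists>Y'. msub A G (Comma X2 X1) Y' \<and> bequiv Y Y'"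
      by (meson bequiv.comma_comm mcomma)
  next
    fix Y assume "msub A G (Comma X2 X1) Y"
    then obtain Y1 Y2 where "Y = Comma Y1 Y2" "msub A G X2 Y1" "msub A G X1 Y2" by (blast dest: msub_Comma)
    then show "\<exists>Y'. msub A G (Comma X1 X2) Y' \<and> bequiv Y' Y"
      by (meson bequiv.comma_comm mcomma)
  qed
next
  case (semi_comm X1 X2)
  show ?case
  proof (intro conjI allI impI)
    fix Y assume "msub A G (Semi X1 X2) Y"
    then obtain Y1 Y2 where "Y = Semi Y1 Y2" "msub A G X1 Y1" "msub A G X2 Y2" by (blast dest: msub_Semi)
    then show "\<exists>Y'. msub A G (Semi X2 X1) Y' \<and> bequiv Y Y'"
      by (meson bequiv.semi_comm msemi)
  next
    fix Y assume "msub A G (Semi X2 X1) Y"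
    then obtain Y1 Y2 where "Y = Semi Y1 Y2" "msub A G X2 Y1" "msub A G X1 Y2" by (blast dest: msub_Semi)
    then show "\<exists>Y'. msub A G (Semi X1 X2) Y' \<and> bequiv Y' Y"
      by (meson bequiv.semi_comm msemi)
  qed
next
  case (comma_assoc X1 X2 X3)
  show ?case
  proof (intro conjI allI impI)
    fix Y assume "msub A G (Comma (Comma X1 X2) X3) Y"
    then obtain Y1 Y2 Y3 where "Y = Comma (Comma Y1 Y2) Y3" "msub A G X1 Y1" "msub A G X2 Y2" "msub A G X3 Y3"
      by (blast dest: msub_Comma)
    then show "\<exists>Y'. msub A G (Comma X1 (Comma X2 X3)) Y' \<and> bequiv Y Y'"
      by (meson bequiv.comma_assoc mcomma)
  next
    fix Y assume "msub A G (Comma X1 (Comma X2 X3)) Y"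
    then obtain Y1 Y2 Y3 where "Y = Comma Y1 (Comma Y2 Y3)" "msub A G X1 Y1" "msub A G X2 Y2" "msub A G X3 Y3"
      by (blast dest: msub_Comma)
    then show "\<exists>Y'. msub A G (Comma (Comma X1 X2) X3) Y' \<and> bequiv Y' Y"
      by (meson bequiv.comma_assoc mcomma)
  qed
next
  case (semi_assoc X1 X2 X3)
  show ?case
  proof (intro conjI allI impI)
    fix Y assume "msub A G (Semi (Semi X1 X2) X3) Y"
    then obtain Y1 Y2 Y3 where "Y = Semi (Semi Y1 Y2) Y3" "msub A G X1 Y1" "msub A G X2 Y2" "msub A G X3 Y3"
      by (blast dest: msub_Semi)
    then show "\<exists>Y'. msub A G (Semi X1 (Semi X2 X3)) Y' \<and> bequiv Y Y'"
      by (meson bequiv.semi_assoc msemi)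
  next
    fix Y assume "msub A G (Semi X1 (Semi X2 X3)) Y"
    then obtain Y1 Y2 Y3 where "Y = Semi Y1 (Semi Y2 Y3)" "msub A G X1 Y1" "msub A G X2 Y2" "msub A G X3 Y3"
      by (blast dest: msub_Semi)
    then show "\<exists>Y'. msub A G (Semi (Semi X1 X2) X3) Y' \<and> bequiv Y' Y"
      by (meson bequiv.semi_assoc msemi)
  qed
next
  case (comma_unit X1)
  show ?case
  proof (intro conjI allI impI)
    fix Y assume "msub A G (Comma X1 EmpM) Y"
    then obtain Y1 Y2 where "Y = Comma Y1 Y2" "msub A G X1 Y1" "msub A G EmpM Y2" by (blast dest: msub_Comma)
    then show "\<exists>Y'. msub A G X1 Y' \<and> bequiv Y Y'"
      by (metis bequiv.comma_unit msub_EmpM)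
  next
    fix Y assume "msub A G X1 Y"
    then show "\<exists>Y'. msub A G (Comma X1 EmpM) Y' \<and> bequiv Y' Y"
      by (meson bequiv.comma_unit mcomma mrefl)
  qed
next
  case (semi_unit X1)
  show ?case
  proof (intro conjI allI impI)
    fix Y assume "msub A G (Semi X1 EmpA) Y"
    then obtain Y1 Y2 where "Y = Semi Y1 Y2" "msub A G X1 Y1" "msub A G EmpA Y2" by (blast dest: msub_Semi)
    then show "\<exists>Y'. msub A G X1 Y' \<and> bequiv Y Y'"
      by (metis bequiv.semi_unit msub_EmpA)
  next
    fix Y assume "msub A G X1 Y"
    then show "\<exists>Y'. msub A G (Semi X1 EmpA) Y' \<and> bequiv Y' Y"
      by (meson bequiv.semi_unit msemi mrefl)
  qed
qed

lemma tsubst_cong: "(\<forall>j\<in>set (tvars T). f j = g j) \<Longrightarrow> tsubst T f = tsubst T g"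
  by (induction T) auto

lemma msub_tsubst: "(\<forall>j. msub A G (ds j) (ds' j)) \<Longrightarrow> msub A G (tsubst T ds) (tsubst T ds')"
  by (induction T) (auto intro: msub.intros)

lemma msub_tsubst_decomp:
  "distinct (tvars T) \<Longrightarrow> msub A G (tsubst T ds) Z \<Longrightarrow>
    \<exists>ds'. Z = tsubst T ds' \<and> (\<forall>j. msub A G (ds j) (ds' j))"
proof (induction T arbitrary: Z)
  case (Var n)
  then show ?case by (intro exI[of _ "ds(n := Z)"]) (auto intro: mrefl)
next
  case (TComma s t)
  from msub_Comma[OF TComma.prems(2)[simplified]] obtain Z1 Z2 where
    z: "Z = Comma Z1 Z2" "msub A G (tsubst s ds) Z1" "msub A G (tsubst t ds) Z2" by blast
  from TComma.IH(1)[OF _ z(2)] TComma.prems(1) obtain d1 where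
    d1: "Z1 = tsubst s d1" "\<forall>j. msub A G (ds j) (d1 j)" by auto
  from TComma.IH(2)[OF _ z(3)] TComma.prems(1) obtain d2 where
    d2: "Z2 = tsubst t d2" "\<forall>j. msub A G (ds j) (d2 j)" by auto
  define d where "d = (\<lambda>j. if j \<in> set (tvars s) then d1 j else d2 j)"
  have "tsubst s d = tsubst s d1" by (rule tsubst_cong) (simp add: d_def)
  moreover have "tsubst t d = tsubst t d2" using TComma.prems(1)
    by (intro tsubst_cong) (auto simp add: d_def)
  ultimately show ?case using z d1 d2 by (intro exI[of _ d]) (auto simp: d_def)
next
  case (TSemi s t)
  from msub_Semi[OF TSemi.prems(2)[simplified]] obtain Z1 Z2 where
    z: "Z = Semi Z1 Z2" "msub A G (tsubst s ds) Z1" "msub A G (tsubst t ds) Z2" by blast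
  from TSemi.IH(1)[OF _ z(2)] TSemi.prems(1) obtain d1 where
    d1: "Z1 = tsubst s d1" "\<forall>j. msub A G (ds j) (d1 j)" by auto
  from TSemi.IH(2)[OF _ z(3)] TSemi.prems(1) obtain d2 where
    d2: "Z2 = tsubst t d2" "\<forall>j. msub A G (ds j) (d2 j)" by auto
  define d where "d = (\<lambda>j. if j \<in> set (tvars s) then d1 j else d2 j)"
  have "tsubst s d = tsubst s d1" by (rule tsubst_cong) (simp add: d_def)
  moreover have "tsubst t d = tsubst t d2" using TSemi.prems(1)
    by (intro tsubst_cong) (auto simp add: d_def)
  ultimately show ?case using z d1 d2 by (intro exI[of _ d]) (auto simp: d_def)
qed

fun comp :: "'a ctx \<Rightarrow> 'a ctx \<Rightarrow> 'a ctx" where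
  "comp Hole E = E"
| "comp (CommaL C b) E = CommaL (comp C E) b"
| "comp (CommaR b C) E = CommaR b (comp C E)"
| "comp (SemiL C b) E = SemiL (comp C E) b"
| "comp (SemiR b C) E = SemiR b (comp C E)"

lemma fill_comp[simp]: "fill (comp D E) U = fill D (fill E U)"
  by (induction D) auto

fun Q :: "srule set \<Rightarrow> 'a fm \<Rightarrow> 'a ctx \<Rightarrow> 'a fm \<Rightarrow> bool" where
  "Q L (Atom a) K W = False"
| "Q L Top K W = cf L (fill K EmpA) W"
| "Q L Bot K W = True"
| "Q L (Conj A B) K W = cf L (fill K (Semi (Leaf A) (Leaf B))) W"
| "Q L (Disj A B) K W = (cf L (fill K (Leaf A)) W \<and> cf L (fill K (Leaf B)) W)"
| "Q L (Imp A B) K W = (\<exists>K' H. K = comp K' (SemiR H Hole) \<and> cf L H A \<and> cf L (fill K' (Leaf B)) W)"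
| "Q L Emp K W = cf L (fill K EmpM) W"
| "Q L (Star A B) K W = cf L (fill K (Comma (Leaf A) (Leaf B))) W"
| "Q L (Wand A B) K W = (\<exists>K' H. K = comp K' (CommaR H Hole) \<and> cf L H A \<and> cf L (fill K' (Leaf B)) W)"

definition cutP :: "srule set \<Rightarrow> 'a fm \<Rightarrow> bool" where
  "cutP L A \<longleftrightarrow> (\<forall>G W X Y. cf L G A \<longrightarrow> cf L X W \<longrightarrow> msub A G X Y \<longrightarrow> cf L Y W)"

lemma cutPD: "cutP L A \<Longrightarrow> cf L G A \<Longrightarrow> cf L X W \<Longrightarrow> msub A G X Y \<Longrightarrow> cf L Y W"
  unfolding cutP_def by blast

lemma sub_use: "\<forall>A0::'a fm. size A0 < n \<longrightarrow> cutP L A0 \<Longrightarrow> size (A1::'a fm) < n \<Longrightarrow> cutP L A1"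
  by blast

lemma left:
  "cf L G (A::'a fm) \<Longrightarrow> (\<forall>A0::'a fm. size A0 < size A \<longrightarrow> cutP L A0) \<Longrightarrow> Q L A K W \<Longrightarrow> cf L (fill K G) W"
proof (induction arbitrary: K W rule: cf.induct)
  case (ax a)
  then show ?case by simp
next
  case (equiv G0 G1 A0)
  then show ?case by (meson cf.equiv bequiv_fill)
next
  case (weak E Z A0 Z')
  from weak.IH[OF weak.prems] have "cf L (fill (comp K E) Z) W" by simp
  then have "cf L (fill (comp K E) (Semi Z Z')) W" by (rule cf.weak)
  then show ?case by simp
next
  case (contr E Z A0)
  from contr.IH[OF contr.prems] have "cf L (fill (comp K E) (Semi Z Z)) W" by simp
  then have "cf L (fill (comp K E) Z) W" by (rule cf.contr)
  then show ?case by simp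
next
  case topR
  then show ?case by simp
next
  case (topL E A0)
  from topL.IH[OF topL.prems] have "cf L (fill (comp K E) EmpA) W" by simp
  then have "cf L (fill (comp K E) (Leaf Top)) W" by (rule cf.topL)
  then show ?case by simp
next
  case empR
  then show ?case by simp
next
  case (empL E A0)
  from empL.IH[OF empL.prems] have "cf L (fill (comp K E) EmpM) W" by simp
  then have "cf L (fill (comp K E) (Leaf Emp)) W" by (rule cf.empL)
  then show ?case by simp
next
  case (botL E A0)
  have "cf L (fill (comp K E) (Leaf Bot)) W" by (rule cf.botL)
  then show ?case by simp
next
  case (conjL E A1 B1 A0)
  from conjL.IH[OF conjL.prems] have "cf L (fill (comp K E) (Semi (Leaf A1) (Leaf B1))) W" by simp
  then have "cf L (fill (comp K E) (Leaf (Conj A1 B1))) W" by (rule cf.conjL)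
  then show ?case by simp
next
  case (conjR G1 A1 G2 B1)
  have c1: "cutP L A1" by (rule sub_use[OF conjR.prems(1)]) simp
  have c2: "cutP L B1" by (rule sub_use[OF conjR.prems(1)]) simp
  have q: "cf L (fill K (Semi (Leaf A1) (Leaf B1))) W" using conjR.prems(2) by simp
  have "cf L (fill K (Semi G1 (Leaf B1))) W"
    by (rule cutPD[OF c1 conjR.hyps(1) q]) (intro msub_fill msemi mleaf mrefl)
  then show ?case
    by (rule cutPD[OF c2 conjR.hyps(2)]) (intro msub_fill msemi mleaf mrefl)
next
  case (disjL E A1 A0 B1)
  from disjL.IH(1)[OF disjL.prems] have "cf L (fill (comp K E) (Leaf A1)) W" by simp
  moreover from disjL.IH(2)[OF disjL.prems] have "cf L (fill (comp K E) (Leaf B1)) W" by simp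
  ultimately have "cf L (fill (comp K E) (Leaf (Disj A1 B1))) W" by (rule cf.disjL)
  then show ?case by simp
next
  case (disjR1 G0 A1 B1)
  have c1: "cutP L A1" by (rule sub_use[OF disjR1.prems(1)]) simp
  have q: "cf L (fill K (Leaf A1)) W" using disjR1.prems(2) by simp
  show ?case
    by (rule cutPD[OF c1 disjR1.hyps(1) q]) (intro msub_fill mleaf)
next
  case (disjR2 G0 B1 A1)
  have c1: "cutP L B1" by (rule sub_use[OF disjR2.prems(1)]) simp
  have q: "cf L (fill K (Leaf B1)) W" using disjR2.prems(2) by simp
  show ?case
    by (rule cutPD[OF c1 disjR2.hyps(1) q]) (intro msub_fill mleaf)
next
  case (impL G0 A1 E B1 A0)
  from impL.IH(2)[OF impL.prems] have "cf L (fill (comp K E) (Leaf B1)) W" by simp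
  with impL.hyps(1) have "cf L (fill (comp K E) (Semi G0 (Leaf (Imp A1 B1)))) W" by (rule cf.impL)
  then show ?case by simp
next
  case (impR G0 A1 B1)
  have c1: "cutP L A1" by (rule sub_use[OF impR.prems(1)]) simp
  have c2: "cutP L B1" by (rule sub_use[OF impR.prems(1)]) simp
  obtain K' H where k: "K = comp K' (SemiR H Hole)" "cf L H A1" "cf L (fill K' (Leaf B1)) W"
    using impR.prems(2) by auto
  have "cf L (Semi G0 H) B1"
    by (rule cutPD[OF c1 k(2) impR.hyps(1)]) (intro msemi mleaf mrefl)
  have "cf L (fill K' (Semi G0 H)) W"
    by (rule cutPD[OF c2 \<open>cf L (Semi G0 H) B1\<close> k(3)]) (intro msub_fill mleaf)
  then have "cf L (fill K' (Semi H G0)) W"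
    by (rule cf.equiv[rotated]) (intro bequiv_fill semi_comm)
  then show ?case using k(1) by simp
next
  case (starL E A1 B1 A0)
  from starL.IH[OF starL.prems] have "cf L (fill (comp K E) (Comma (Leaf A1) (Leaf B1))) W" by simp
  then have "cf L (fill (comp K E) (Leaf (Star A1 B1))) W" by (rule cf.starL)
  then show ?case by simp
next
  case (starR G1 A1 G2 B1)
  have c1: "cutP L A1" by (rule sub_use[OF starR.prems(1)]) simp
  have c2: "cutP L B1" by (rule sub_use[OF starR.prems(1)]) simp
  have q: "cf L (fill K (Comma (Leaf A1) (Leaf B1))) W" using starR.prems(2) by simp
  have "cf L (fill K (Comma G1 (Leaf B1))) W"
    by (rule cutPD[OF c1 starR.hyps(1) q]) (intro msub_fill mcomma mleaf mrefl)
  then show ?case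
    by (rule cutPD[OF c2 starR.hyps(2)]) (intro msub_fill mcomma mleaf mrefl)
next
  case (wandL G0 A1 E B1 A0)
  from wandL.IH(2)[OF wandL.prems] have "cf L (fill (comp K E) (Leaf B1)) W" by simp
  with wandL.hyps(1) have "cf L (fill (comp K E) (Comma G0 (Leaf (Wand A1 B1)))) W" by (rule cf.wandL)
  then show ?case by simp
next
  case (wandR G0 A1 B1)
  have c1: "cutP L A1" by (rule sub_use[OF wandR.prems(1)]) simp
  have c2: "cutP L B1" by (rule sub_use[OF wandR.prems(1)]) simp
  obtain K' H where k: "K = comp K' (CommaR H Hole)" "cf L H A1" "cf L (fill K' (Leaf B1)) W"
    using wandR.prems(2) by auto
  have "cf L (Comma G0 H) B1"
    by (rule cutPD[OF c1 k(2) wandR.hyps(1)]) (intro mcomma mleaf mrefl)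
  have "cf L (fill K' (Comma G0 H)) W"
    by (rule cutPD[OF c2 \<open>cf L (Comma G0 H) B1\<close> k(3)]) (intro msub_fill mleaf)
  then have "cf L (fill K' (Comma H G0)) W"
    by (rule cf.equiv[rotated]) (intro bequiv_fill comma_comm)
  then show ?case using k(1) by simp
next
  case (struct Ts T P ds A0)
  have "\<forall>T'\<in>Ts. cf L (fill (comp K P) (tsubst T' ds)) W"
    using struct.IH struct.prems by simp
  then have "cf L (fill (comp K P) (tsubst T ds)) W" by (rule cf.struct[OF struct.hyps(1)])
  then show ?case by simp
qed


lemma right:
  fixes A :: "'a fm"
  assumes lin: "\<forall>r\<in>L. simple_rule r" and g: "cf L G A"
    and lft: "\<And>K W. Q L A K W \<Longrightarrow> cf L (fill K G) W"
  shows "cf L X W \<Longrightarrow> msub A G X Y \<Longrightarrow> cf L Y W"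
proof (induction arbitrary: Y rule: cf.induct)
  case (ax a)
  then show ?case using g by (metis msub_Leaf cf.ax)
next
  case (equiv X0 X1 C0)
  have "\<forall>Y'. msub A G X1 Y' \<longrightarrow> (\<exists>Y. msub A G X0 Y \<and> bequiv Y Y')"
    using msub_bequiv[OF equiv.hyps(1)] by (rule conjunct2)
  then obtain Y0 where y: "msub A G X0 Y0" "bequiv Y0 Y" using equiv.prems by blast
  have "cf L Y0 C0" by (rule equiv.IH[OF y(1)])
  then show ?case by (rule cf.equiv[OF y(2)])
next
  case (weak E Z C0 Z')
  from msub_fill_decomp[OF weak.prems] obtain E' V where
    d: "Y = fill E' V" "msub A G (Semi Z Z') V"
       "\<forall>U U'. msub A G U U' \<longrightarrow> msub A G (fill E U) (fill E' U')" by (elim exE conjE) (rule that)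
  from msub_Semi[OF d(2)] obtain V1 V2 where v: "V = Semi V1 V2" "msub A G Z V1" by blast
  have "cf L (fill E' V1) C0" by (rule weak.IH[OF d(3)[rule_format, OF v(2)]])
  then show ?case unfolding d(1) v(1) by (rule cf.weak)
next
  case (contr E Z C0)
  from msub_fill_decomp[OF contr.prems] obtain E' V where
    d: "Y = fill E' V" "msub A G Z V"
       "\<forall>U U'. msub A G U U' \<longrightarrow> msub A G (fill E U) (fill E' U')" by (elim exE conjE) (rule that)
  have "msub A G (fill E (Semi Z Z)) (fill E' (Semi V V))" using d(3)[rule_format, OF msemi[OF d(2) d(2)]] .
  then have "cf L (fill E' (Semi V V)) C0" by (rule contr.IH)
  then show ?case unfolding d(1) by (rule cf.contr)
next
  case topR
  then have "Y = EmpA" by (rule msub_EmpA)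
  then show ?case by (simp add: cf.topR)
next
  case (topL E C0)
  from msub_fill_decomp[OF topL.prems] obtain E' V where
    d: "Y = fill E' V" "msub A G (Leaf Top) V"
       "\<forall>U U'. msub A G U U' \<longrightarrow> msub A G (fill E U) (fill E' U')" by (elim exE conjE) (rule that)
  have ih: "cf L (fill E' EmpA) C0" by (rule topL.IH[OF d(3)[rule_format, OF mrefl]])
  from msub_Leaf[OF d(2)] show ?case
  proof
    assume vv: "V = Leaf Top" show ?thesis unfolding d(1) vv using ih by (rule cf.topL)
  next
    assume a: "Top = A \<and> V = G"
    have "Q L A E' C0" using ih by (simp add: a[THEN conjunct1, symmetric])
    then have "cf L (fill E' G) C0" by (rule lft)
    then show ?thesis using d(1) a by simp
  qed
next
  case empR
  then have "Y = EmpM" by (rule msub_EmpM)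
  then show ?case by (simp add: cf.empR)
next
  case (empL E C0)
  from msub_fill_decomp[OF empL.prems] obtain E' V where
    d: "Y = fill E' V" "msub A G (Leaf Emp) V"
       "\<forall>U U'. msub A G U U' \<longrightarrow> msub A G (fill E U) (fill E' U')" by (elim exE conjE) (rule that)
  have ih: "cf L (fill E' EmpM) C0" by (rule empL.IH[OF d(3)[rule_format, OF mrefl]])
  from msub_Leaf[OF d(2)] show ?case
  proof
    assume vv: "V = Leaf Emp" show ?thesis unfolding d(1) vv using ih by (rule cf.empL)
  next
    assume a: "Emp = A \<and> V = G"
    have "Q L A E' C0" using ih by (simp add: a[THEN conjunct1, symmetric])
    then have "cf L (fill E' G) C0" by (rule lft)
    then show ?thesis using d(1) a by simp
  qed
next
  case (botL E C0)
  from msub_fill_decomp[OF botL.prems] obtain E' V where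
    d: "Y = fill E' V" "msub A G (Leaf Bot) V" by (elim exE conjE) (rule that)
  from msub_Leaf[OF d(2)] show ?case
  proof
    assume vv: "V = Leaf Bot" show ?thesis unfolding d(1) vv by (rule cf.botL)
  next
    assume a: "Bot = A \<and> V = G"
    have "Q L A E' C0" by (simp add: a[THEN conjunct1, symmetric])
    then have "cf L (fill E' G) C0" by (rule lft)
    then show ?thesis using d(1) a by simp
  qed
next
  case (conjL E A1 B1 C0)
  from msub_fill_decomp[OF conjL.prems] obtain E' V where
    d: "Y = fill E' V" "msub A G (Leaf (Conj A1 B1)) V"
       "\<forall>U U'. msub A G U U' \<longrightarrow> msub A G (fill E U) (fill E' U')" by (elim exE conjE) (rule that)
  have ih: "cf L (fill E' (Semi (Leaf A1) (Leaf B1))) C0" by (rule conjL.IH[OF d(3)[rule_format, OF mrefl]])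
  from msub_Leaf[OF d(2)] show ?case
  proof
    assume vv: "V = Leaf (Conj A1 B1)" show ?thesis unfolding d(1) vv using ih by (rule cf.conjL)
  next
    assume a: "Conj A1 B1 = A \<and> V = G"
    have "Q L A E' C0" using ih by (simp add: a[THEN conjunct1, symmetric])
    then have "cf L (fill E' G) C0" by (rule lft)
    then show ?thesis using d(1) a by simp
  qed
next
  case (conjR G1 A1 G2 B1)
  from msub_Semi[OF conjR.prems] obtain Y1 Y2 where
    y: "Y = Semi Y1 Y2" "msub A G G1 Y1" "msub A G G2 Y2" by blast
  show ?case unfolding y(1) by (rule cf.conjR[OF conjR.IH(1)[OF y(2)] conjR.IH(2)[OF y(3)]])
next
  case (disjL E A1 C0 B1)
  from msub_fill_decomp[OF disjL.prems] obtain E' V where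
    d: "Y = fill E' V" "msub A G (Leaf (Disj A1 B1)) V"
       "\<forall>U U'. msub A G U U' \<longrightarrow> msub A G (fill E U) (fill E' U')" by (elim exE conjE) (rule that)
  have ih1: "cf L (fill E' (Leaf A1)) C0" by (rule disjL.IH(1)[OF d(3)[rule_format, OF mrefl]])
  have ih2: "cf L (fill E' (Leaf B1)) C0" by (rule disjL.IH(2)[OF d(3)[rule_format, OF mrefl]])
  from msub_Leaf[OF d(2)] show ?case
  proof
    assume vv: "V = Leaf (Disj A1 B1)" show ?thesis unfolding d(1) vv using ih1 ih2 by (rule cf.disjL)
  next
    assume a: "Disj A1 B1 = A \<and> V = G"
    have "Q L A E' C0" using ih1 ih2 by (simp add: a[THEN conjunct1, symmetric])
    then have "cf L (fill E' G) C0" by (rule lft)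
    then show ?thesis using d(1) a by simp
  qed
next
  case (disjR1 X0 A1 B1)
  show ?case by (rule cf.disjR1[OF disjR1.IH[OF disjR1.prems]])
next
  case (disjR2 X0 B1 A1)
  show ?case by (rule cf.disjR2[OF disjR2.IH[OF disjR2.prems]])
next
  case (impL G0 A1 E B1 C0)
  from msub_fill_decomp[OF impL.prems] obtain E' V where
    d: "Y = fill E' V" "msub A G (Semi G0 (Leaf (Imp A1 B1))) V"
       "\<forall>U U'. msub A G U U' \<longrightarrow> msub A G (fill E U) (fill E' U')" by (elim exE conjE) (rule that)
  from msub_Semi[OF d(2)] obtain V1 V2 where
    v: "V = Semi V1 V2" "msub A G G0 V1" "msub A G (Leaf (Imp A1 B1)) V2" by blast
  have ih1: "cf L V1 A1" by (rule impL.IH(1)[OF v(2)])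
  have ih2: "cf L (fill E' (Leaf B1)) C0" by (rule impL.IH(2)[OF d(3)[rule_format, OF mrefl]])
  from msub_Leaf[OF v(3)] show ?case
  proof
    assume vv: "V2 = Leaf (Imp A1 B1)" show ?thesis unfolding d(1) v(1) vv using ih1 ih2 by (rule cf.impL)
  next
    assume a: "Imp A1 B1 = A \<and> V2 = G"
    have "Q L A (comp E' (SemiR V1 Hole)) C0" unfolding a[THEN conjunct1, symmetric] Q.simps using ih1 ih2 by blast
    then have "cf L (fill (comp E' (SemiR V1 Hole)) G) C0" by (rule lft)
    then show ?thesis using d(1) v(1) a by simp
  qed
next
  case (impR X0 A1 B1)
  have "msub A G (Semi X0 (Leaf A1)) (Semi Y (Leaf A1))" using impR.prems by (intro msemi mrefl)
  then show ?case by (rule cf.impR[OF impR.IH])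
next
  case (starL E A1 B1 C0)
  from msub_fill_decomp[OF starL.prems] obtain E' V where
    d: "Y = fill E' V" "msub A G (Leaf (Star A1 B1)) V"
       "\<forall>U U'. msub A G U U' \<longrightarrow> msub A G (fill E U) (fill E' U')" by (elim exE conjE) (rule that)
  have ih: "cf L (fill E' (Comma (Leaf A1) (Leaf B1))) C0" by (rule starL.IH[OF d(3)[rule_format, OF mrefl]])
  from msub_Leaf[OF d(2)] show ?case
  proof
    assume vv: "V = Leaf (Star A1 B1)" show ?thesis unfolding d(1) vv using ih by (rule cf.starL)
  next
    assume a: "Star A1 B1 = A \<and> V = G"
    have "Q L A E' C0" using ih by (simp add: a[THEN conjunct1, symmetric])
    then have "cf L (fill E' G) C0" by (rule lft)
    then show ?thesis using d(1) a by simp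
  qed
next
  case (starR G1 A1 G2 B1)
  from msub_Comma[OF starR.prems] obtain Y1 Y2 where
    y: "Y = Comma Y1 Y2" "msub A G G1 Y1" "msub A G G2 Y2" by blast
  show ?case unfolding y(1) by (rule cf.starR[OF starR.IH(1)[OF y(2)] starR.IH(2)[OF y(3)]])
next
  case (wandL G0 A1 E B1 C0)
  from msub_fill_decomp[OF wandL.prems] obtain E' V where
    d: "Y = fill E' V" "msub A G (Comma G0 (Leaf (Wand A1 B1))) V"
       "\<forall>U U'. msub A G U U' \<longrightarrow> msub A G (fill E U) (fill E' U')" by (elim exE conjE) (rule that)
  from msub_Comma[OF d(2)] obtain V1 V2 where
    v: "V = Comma V1 V2" "msub A G G0 V1" "msub A G (Leaf (Wand A1 B1)) V2" by blast
  have ih1: "cf L V1 A1" by (rule wandL.IH(1)[OF v(2)])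
  have ih2: "cf L (fill E' (Leaf B1)) C0" by (rule wandL.IH(2)[OF d(3)[rule_format, OF mrefl]])
  from msub_Leaf[OF v(3)] show ?case
  proof
    assume vv: "V2 = Leaf (Wand A1 B1)" show ?thesis unfolding d(1) v(1) vv using ih1 ih2 by (rule cf.wandL)
  next
    assume a: "Wand A1 B1 = A \<and> V2 = G"
    have "Q L A (comp E' (CommaR V1 Hole)) C0" unfolding a[THEN conjunct1, symmetric] Q.simps using ih1 ih2 by blast
    then have "cf L (fill (comp E' (CommaR V1 Hole)) G) C0" by (rule lft)
    then show ?thesis using d(1) v(1) a by simp
  qed
next
  case (wandR X0 A1 B1)
  have "msub A G (Comma X0 (Leaf A1)) (Comma Y (Leaf A1))" using wandR.prems by (intro mcomma mrefl)
  then show ?case by (rule cf.wandR[OF wandR.IH])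
next
  case (struct Ts T P ds C0)
  from msub_fill_decomp[OF struct.prems] obtain P' V where
    d: "Y = fill P' V" "msub A G (tsubst T ds) V"
       "\<forall>U U'. msub A G U U' \<longrightarrow> msub A G (fill P U) (fill P' U')" by (elim exE conjE) (rule that)
  have "distinct (tvars T)" using lin struct.hyps(1) by (auto simp: simple_rule_def linear_def)
  from msub_tsubst_decomp[OF this d(2)] obtain ds' where
    e: "V = tsubst T ds'" "\<forall>j. msub A G (ds j) (ds' j)" by blast
  have "\<forall>T'\<in>Ts. cf L (fill P' (tsubst T' ds')) C0"
  proof
    fix T' assume "T' \<in> Ts"
    moreover have "msub A G (fill P (tsubst T' ds)) (fill P' (tsubst T' ds'))"
      by (rule d(3)[rule_format, OF msub_tsubst[OF e(2)]])
    ultimately show "cf L (fill P' (tsubst T' ds')) C0" using struct.IH by blast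
  qed
  then have "cf L (fill P' (tsubst T ds')) C0" by (rule cf.struct[OF struct.hyps(1)])
  then show ?case using d(1) e(1) by simp
qed

lemma cutP_all:
  assumes "\<forall>r\<in>L. simple_rule r"
  shows "cutP L (A::'a fm)"
proof (induction A rule: measure_induct_rule[of size])
  case (less A)
  show ?case unfolding cutP_def
  proof (intro allI impI)
    fix G W X Y assume g: "cf L G A" and x: "cf L X W" and m: "msub A G X Y"
    have sub: "\<forall>A0::'a fm. size A0 < size A \<longrightarrow> cutP L A0" using less.IH by blast
    have lft: "\<And>K W. Q L A K W \<Longrightarrow> cf L (fill K G) W" using left[OF g sub] by blast
    show "cf L Y W" using right[OF assms g lft x m] .
  qed
qed

theorem theorem7p5:
  fixes L :: "srule set" and D :: "'a ctx" and G :: "'a bunch" and A B :: "'a fm"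
  assumes "finite L"
    and "\<forall>r\<in>L. simple_rule r"
    and "cf L G A"
    and "cf L (fill D (Leaf A)) B"
  shows "cf L (fill D G) B"
  using cutPD[OF cutP_all[OF assms(2)] assms(3) assms(4)] msub_fill[OF mleaf] by blast


end
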